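(* Let $F:X\rightrightarrows Y$ be a set-valued map with nonempty values, $\varphi:X\to\mathbb R$ a function, $\bar x\in X$, $e\in K\setminus\{0\}$, and $f=\varphi(\cdot)e$. If $\widehat\partial\varphi(\bar x)\neq\emptyset$, then $$\widehat\partial(F-f)(\bar x)\subset\bigcap_{t\in\widehat\partial f(\bar x),\ y^*\in K_e^+}\Big(\widehat\partial F(\bar x)-y^*(e)^{-1}(y^*\circ t)e\Big),$$ where $(F-f)(x)=\{y-\varphi(x)e: y\in F(x)\}$ and $y^*(e)^{-1}(y^*\circ t)e$ denotes the operator $x\mapsto y^*(e)^{-1}y^*(t(x))\,e$.
   Context: $X,Y$ are real normed spaces with duals $X^*,Y^*$; $B(X,Y)$ is the space of bounded linear operators $X\to Y$; $B(x,\delta)$ is the open ball and $D_Y$ the closed unit ball. $K\subset Y$ is a pointed closed convex cone, $K^+=\{y^*\in Y^*: y^*(k)\ge0\ \forall k\in K\}$ and $K_e^+=\{y^*\in K^+: y^*(e)\ne0\}$. For $G:X\rightrightarrows Y$ (or a function $G:X\to Y$, via $x\mapsto\{G(x)\}$), $\widehat\partial G(\bar x)$ is the set of all $T\in B(X,Y)$ such that for every $\varepsilon>0$ there is $\delta>0$ with $G(x)+K\subset G(\bar x)+K+T(x-\bar x)+\varepsilon\|x-\bar x\|D_Y$ for all $x\in B(\bar x,\delta)$. $\widehat\partial\varphi(\bar x)$ is the usual Fréchet subdifferential of the real function $\varphi$. *)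

theory Defs
  imports "HOL-Analysis.Analysis"
begin

definition pointed_closed_convex_cone :: "'b::real_normed_vector set \<Rightarrow> bool" where
  "pointed_closed_convex_cone K \<longleftrightarrow> cone K \<and> convex K \<and> closed K \<and> K \<inter> uminus ` K = {0}"

definition dual_cone :: "'b::real_normed_vector set \<Rightarrow> ('b \<Rightarrow> real) set" where
  "dual_cone K = {ys. bounded_linear ys \<and> (\<forall>k\<in>K. ys k \<ge> 0)}"

definition dual_cone_e :: "'b::real_normed_vector set \<Rightarrow> 'b \<Rightarrow> ('b \<Rightarrow> real) set" where
  "dual_cone_e K e = {ys \<in> dual_cone K. ys e \<noteq> 0}"

definition sv_subdiff ::
  "'b::real_normed_vector set \<Rightarrow> ('a::real_normed_vector \<Rightarrow> 'b set) \<Rightarrow> 'a \<Rightarrow> ('a \<Rightarrow> 'b) set" where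
  "sv_subdiff K G xb = {T. bounded_linear T \<and>
     (\<forall>\<epsilon>>0. \<exists>\<delta>>0. \<forall>x\<in>ball xb \<delta>.
        {y + k | y k. y \<in> G x \<and> k \<in> K} \<subseteq>
        {z + k + T (x - xb) + (\<epsilon> * norm (x - xb)) *\<^sub>R d | z k d.
            z \<in> G xb \<and> k \<in> K \<and> d \<in> cball 0 1})}"

definition frechet_subdiff :: "('a::real_normed_vector \<Rightarrow> real) \<Rightarrow> 'a \<Rightarrow> ('a \<Rightarrow> real) set" where
  "frechet_subdiff \<phi> xb = {xs. bounded_linear xs \<and>
     (\<forall>\<epsilon>>0. \<exists>\<delta>>0. \<forall>x\<in>ball xb \<delta>.
        \<phi> x - \<phi> xb - xs (x - xb) \<ge> - \<epsilon> * norm (x - xb))}"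

end

theory Submission
  imports Defs
begin

lemma cone_add:
  assumes "cone K" "convex K" "a \<in> K" "b \<in> K"
  shows "a + b \<in> K"
proof -
  have "(1/2) *\<^sub>R a + (1/2) *\<^sub>R b \<in> K"
    using assms(2-4) unfolding convex_def by auto
  then have "2 *\<^sub>R ((1/2) *\<^sub>R a + (1/2) *\<^sub>R b) \<in> K"
    using assms(1) unfolding cone_def by auto
  then show ?thesis by (simp add: scaleR_add_right)
qed

lemma phi_bound:
  fixes K :: "'b::real_normed_vector set"
  assumes cone: "cone K" and eK: "e \<in> K"
    and t: "t \<in> sv_subdiff K (\<lambda>x. {\<phi> x *\<^sub>R e}) xb"
    and ys: "bounded_linear ys" "\<forall>k\<in>K. ys k \<ge> 0" "ys e > 0"
    and eps: "\<epsilon> > 0"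
  shows "\<exists>\<delta>>0. \<forall>x\<in>ball xb \<delta>. \<phi> x - \<phi> xb - ys (t (x - xb)) / ys e \<ge> - \<epsilon> * norm (x - xb)"
proof -
  obtain B where B: "B > 0" "\<And>v. norm (ys v) \<le> norm v * B"
    using bounded_linear.pos_bounded[OF ys(1)] by blast
  have z: "0 \<in> K" using cone eK unfolding cone_def by (metis scale_zero_left order_refl)
  define e3 where "e3 = \<epsilon> * ys e / B"
  have e3: "e3 > 0" unfolding e3_def using eps ys(3) B by simp
  from t e3 obtain \<delta> where d: "\<delta> > 0" and H: "\<forall>x\<in>ball xb \<delta>.
        {y + k | y k. y \<in> {\<phi> x *\<^sub>R e} \<and> k \<in> K} \<subseteq>
        {z + k + t (x - xb) + (e3 * norm (x - xb)) *\<^sub>R d | z k d.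
            z \<in> {\<phi> xb *\<^sub>R e} \<and> k \<in> K \<and> d \<in> cball 0 1}"
    unfolding sv_subdiff_def by blast
  show ?thesis
  proof (intro exI[of _ \<delta>] conjI ballI d)
    fix x assume x: "x \<in> ball xb \<delta>"
    have "\<phi> x *\<^sub>R e + 0 \<in> {y + k | y k. y \<in> {\<phi> x *\<^sub>R e} \<and> k \<in> K}" using z by blast
    with H x obtain k d where k: "k \<in> K" and dd: "d \<in> cball 0 1" and
      eq: "\<phi> x *\<^sub>R e + 0 = \<phi> xb *\<^sub>R e + k + t (x - xb) + (e3 * norm (x - xb)) *\<^sub>R d"
      by blast
    let ?h = "norm (x - xb)"
    have "ys (\<phi> x *\<^sub>R e + 0) = ys (\<phi> xb *\<^sub>R e + k + t (x - xb) + (e3 * ?h) *\<^sub>R d)"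
      using eq by simp
    then have eq2: "\<phi> x * ys e = \<phi> xb * ys e + ys k + ys (t (x - xb)) + (e3 * ?h) * ys d"
      using ys(1) by (simp add: linear_simps)
    have "norm d \<le> 1" using dd by simp
    then have "norm d * B \<le> 1 * B" using B(1) by (intro mult_right_mono) auto
    then have "norm (ys d) \<le> B" using B(2)[of d] by linarith
    then have yd: "ys d \<ge> - B" by simp
    have "(e3 * ?h) * ys d \<ge> (e3 * ?h) * (- B)"
      using yd e3 by (intro mult_left_mono) auto
    moreover have "(e3 * ?h) * (- B) = - \<epsilon> * ?h * ys e"
      unfolding e3_def using B(1) by (simp add: field_simps)
    ultimately have "\<phi> x * ys e - \<phi> xb * ys e - ys (t (x - xb)) \<ge> - \<epsilon> * ?h * ys e"
    proof -
      have "ys k \<ge> 0" using ys(2) k by blast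
      then show ?thesis using eq2 \<open>(e3 * ?h) * ys d \<ge> (e3 * ?h) * (- B)\<close> \<open>(e3 * ?h) * (- B) = - \<epsilon> * ?h * ys e\<close> by linarith
    qed
    moreover have "(\<phi> x - \<phi> xb - ys (t (x - xb)) / ys e) * ys e = \<phi> x * ys e - \<phi> xb * ys e - ys (t (x - xb))"
      using ys(3) by (simp add: left_diff_distrib)
    ultimately have "(\<phi> x - \<phi> xb - ys (t (x - xb)) / ys e) * ys e \<ge> (- \<epsilon> * ?h) * ys e"
      by simp
    then show "\<phi> x - \<phi> xb - ys (t (x - xb)) / ys e \<ge> - \<epsilon> * ?h"
      using ys(3) mult_le_cancel_right_pos by blast
  qed
qed

lemma key:
  fixes K :: "'b::real_normed_vector set"
    and F :: "'a::real_normed_vector \<Rightarrow> 'b set"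
  assumes cone: "cone K" and cvx: "convex K" and eK: "e \<in> K"
    and S: "S \<in> sv_subdiff K (\<lambda>x. {y - \<phi> x *\<^sub>R e | y. y \<in> F x}) xb"
    and t: "t \<in> sv_subdiff K (\<lambda>x. {\<phi> x *\<^sub>R e}) xb"
    and ys: "bounded_linear ys" "\<forall>k\<in>K. ys k \<ge> 0" "ys e > 0"
  shows "(\<lambda>x. S x + (ys (t x) / ys e) *\<^sub>R e) \<in> sv_subdiff K F xb"
proof -
  have blS: "bounded_linear S" using S unfolding sv_subdiff_def by blast
  have blt: "bounded_linear t" using t unfolding sv_subdiff_def by blast
  have bl1: "bounded_linear (\<lambda>x. ys (t x) / ys e)"
  proof -
    have "bounded_linear (\<lambda>x. ys (t x))" using bounded_linear_compose[OF ys(1) blt] .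
    then show ?thesis by (rule bounded_linear_compose[OF bounded_linear_divide[of "ys e"]])
  qed
  have blT: "bounded_linear (\<lambda>x. S x + (ys (t x) / ys e) *\<^sub>R e)"
    by (rule bounded_linear_add[OF blS bounded_linear_compose[OF bounded_linear_scaleR_left bl1]])
  show ?thesis
    unfolding sv_subdiff_def
  proof (intro CollectI conjI blT allI impI)
    fix \<epsilon> :: real assume eps: "\<epsilon> > 0"
    define e1 where "e1 = \<epsilon> / 2"
    define e2 where "e2 = \<epsilon> / (2 * (norm e + 1))"
    have ne: "norm e + 1 > 0" by (simp add: add_nonneg_pos)
    have e1: "e1 > 0" using eps unfolding e1_def by simp
    have e2: "e2 > 0" using eps ne unfolding e2_def by simp
    have e2n: "e2 * norm e \<le> \<epsilon> / 2"
    proof -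
      have "e2 * norm e \<le> e2 * (norm e + 1)" using e2 by simp
      also have "\<dots> = \<epsilon> / 2" unfolding e2_def using ne by (simp add: field_simps)
      finally show ?thesis .
    qed
    from S e1 obtain d1 where d1: "d1 > 0" and H1: "\<forall>x\<in>ball xb d1.
        {y + k | y k. y \<in> {y - \<phi> x *\<^sub>R e | y. y \<in> F x} \<and> k \<in> K} \<subseteq>
        {z + k + S (x - xb) + (e1 * norm (x - xb)) *\<^sub>R d | z k d.
            z \<in> {y - \<phi> xb *\<^sub>R e | y. y \<in> F xb} \<and> k \<in> K \<and> d \<in> cball 0 1}"
      unfolding sv_subdiff_def by blast
    from phi_bound[OF cone eK t ys e2] obtain d2 where d2: "d2 > 0" and
      H2: "\<forall>x\<in>ball xb d2. \<phi> x - \<phi> xb - ys (t (x - xb)) / ys e \<ge> - e2 * norm (x - xb)"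
      by blast
    show "\<exists>\<delta>>0. \<forall>x\<in>ball xb \<delta>.
        {y + k | y k. y \<in> F x \<and> k \<in> K} \<subseteq>
        {z + k + (S (x - xb) + (ys (t (x - xb)) / ys e) *\<^sub>R e) + (\<epsilon> * norm (x - xb)) *\<^sub>R d | z k d.
            z \<in> F xb \<and> k \<in> K \<and> d \<in> cball 0 1}"
    proof (intro exI[of _ "min d1 d2"] conjI ballI subsetI)
      show "min d1 d2 > 0" using d1 d2 by simp
      fix x w assume x: "x \<in> ball xb (min d1 d2)" and w: "w \<in> {y + k | y k. y \<in> F x \<and> k \<in> K}"
      from w obtain y k where y: "y \<in> F x" and k: "k \<in> K" and wd: "w = y + k" by blast
      let ?h = "norm (x - xb)"
      have x1: "x \<in> ball xb d1" and x2: "x \<in> ball xb d2" using x by auto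
      have "(y - \<phi> x *\<^sub>R e) + k \<in> {y + k | y k. y \<in> {y - \<phi> x *\<^sub>R e | y. y \<in> F x} \<and> k \<in> K}"
        using y k by blast
      with H1 x1 obtain z' k' d' where z': "z' \<in> {y - \<phi> xb *\<^sub>R e | y. y \<in> F xb}" and k': "k' \<in> K"
        and d': "d' \<in> cball 0 1"
        and eq: "(y - \<phi> x *\<^sub>R e) + k = z' + k' + S (x - xb) + (e1 * ?h) *\<^sub>R d'"
        by blast
      from z' obtain z where z: "z \<in> F xb" and zd: "z' = z - \<phi> xb *\<^sub>R e" by blast
      define a where "a = \<phi> x - \<phi> xb - ys (t (x - xb)) / ys e"
      have a: "a \<ge> - e2 * ?h" using H2 x2 unfolding a_def by blast
      define c where "c = min a 0"
      define p where "p = a - c"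
      have p: "p \<ge> 0" unfolding p_def c_def by simp
      have c: "c \<le> 0" "c \<ge> - e2 * ?h" using a e2 unfolding c_def by auto
      have pK: "p *\<^sub>R e \<in> K" using cone eK p unfolding cone_def by blast
      have kK: "k' + p *\<^sub>R e \<in> K" by (rule cone_add[OF cone cvx k' pK])
      define V where "V = (e1 * ?h) *\<^sub>R d' + c *\<^sub>R e"
      have weq: "w = z + (k' + p *\<^sub>R e) + (S (x - xb) + (ys (t (x - xb)) / ys e) *\<^sub>R e) + V"
      proof -
        have "y + k = z' + k' + S (x - xb) + (e1 * ?h) *\<^sub>R d' + \<phi> x *\<^sub>R e"
          using eq by (simp add: algebra_simps)
        moreover have "\<phi> x *\<^sub>R e = \<phi> xb *\<^sub>R e + (ys (t (x - xb)) / ys e) *\<^sub>R e + p *\<^sub>R e + c *\<^sub>R e"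
          unfolding p_def a_def by (simp add: algebra_simps flip: scaleR_add_left)
        ultimately show ?thesis unfolding wd zd V_def by (simp add: algebra_simps)
      qed
      have nV: "norm V \<le> \<epsilon> * ?h"
      proof -
        have "norm V \<le> norm ((e1 * ?h) *\<^sub>R d') + norm (c *\<^sub>R e)" unfolding V_def by (rule norm_triangle_ineq)
        also have "norm ((e1 * ?h) *\<^sub>R d') \<le> e1 * ?h"
        proof -
          have "norm ((e1 * ?h) *\<^sub>R d') = e1 * ?h * norm d'" using e1 by simp
          also have "\<dots> \<le> e1 * ?h * 1" using d' e1 by (intro mult_left_mono) auto
          finally show ?thesis by simp
        qed
        also have "norm (c *\<^sub>R e) \<le> e2 * ?h * norm e"
        proof -
          have "norm (c *\<^sub>R e) = \<bar>c\<bar> * norm e" by simp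
          also have "\<dots> \<le> (e2 * ?h) * norm e" using c by (intro mult_right_mono) auto
          finally show ?thesis .
        qed
        also have "e2 * ?h * norm e \<le> (\<epsilon> / 2) * ?h"
          using e2n by (metis mult.assoc mult.commute mult_right_mono norm_ge_zero)
        finally show ?thesis unfolding e1_def by simp
      qed
      define D where "D = (if ?h = 0 then 0 else (1 / (\<epsilon> * ?h)) *\<^sub>R V)"
      have DV: "V = (\<epsilon> * ?h) *\<^sub>R D \<and> D \<in> cball 0 1"
      proof (cases "?h = 0")
        case True
        then have "norm V \<le> 0" using nV by simp
        then show ?thesis using True unfolding D_def by simp
      next
        case False
        then have hp: "?h > 0" by simp
        have "norm D = norm V / (\<epsilon> * ?h)" using False eps unfolding D_def by simp
        also have "\<dots> \<le> 1" using nV hp eps by (simp add: divide_le_eq)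
        finally show ?thesis using False eps unfolding D_def by simp
      qed
      show "w \<in> {z + k + (S (x - xb) + (ys (t (x - xb)) / ys e) *\<^sub>R e) + (\<epsilon> * norm (x - xb)) *\<^sub>R d | z k d.
            z \<in> F xb \<and> k \<in> K \<and> d \<in> cball 0 1}"
        using weq DV z kK by blast
    qed
  qed
qed

theorem mainTheorem13:
  fixes K :: "'b::real_normed_vector set"
    and F :: "'a::real_normed_vector \<Rightarrow> 'b set"
    and \<phi> :: "'a \<Rightarrow> real"
    and xb :: 'a and e :: 'b
  assumes "pointed_closed_convex_cone K"
    and "\<And>x. F x \<noteq> {}"
    and "e \<in> K" and "e \<noteq> 0"
    and "frechet_subdiff \<phi> xb \<noteq> {}"
  shows "sv_subdiff K (\<lambda>x. {y - \<phi> x *\<^sub>R e | y. y \<in> F x}) xb \<subseteq>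
    (\<Inter>t \<in> sv_subdiff K (\<lambda>x. {\<phi> x *\<^sub>R e}) xb. \<Inter>ys \<in> dual_cone_e K e.
       {(\<lambda>x. T x - (ys (t x) / ys e) *\<^sub>R e) | T. T \<in> sv_subdiff K F xb})"
proof (rule subsetI)
  fix S
  assume S: "S \<in> sv_subdiff K (\<lambda>x. {y - \<phi> x *\<^sub>R e | y. y \<in> F x}) xb"
  show "S \<in> (\<Inter>t \<in> sv_subdiff K (\<lambda>x. {\<phi> x *\<^sub>R e}) xb. \<Inter>ys \<in> dual_cone_e K e.
       {(\<lambda>x. T x - (ys (t x) / ys e) *\<^sub>R e) | T. T \<in> sv_subdiff K F xb})"
  proof (intro INT_I)
  fix t ys
  assume t: "t \<in> sv_subdiff K (\<lambda>x. {\<phi> x *\<^sub>R e}) xb" and ys: "ys \<in> dual_cone_e K e"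
  have cone: "cone K" and cvx: "convex K" using assms(1) unfolding pointed_closed_convex_cone_def by auto
  have ys1: "bounded_linear ys" "\<forall>k\<in>K. ys k \<ge> 0" using ys unfolding dual_cone_e_def dual_cone_def by auto
  have "ys e \<ge> 0" "ys e \<noteq> 0" using ys assms(3) unfolding dual_cone_e_def dual_cone_def by auto
  then have ys3: "ys e > 0" by simp
  have T: "(\<lambda>x. S x + (ys (t x) / ys e) *\<^sub>R e) \<in> sv_subdiff K F xb"
    by (rule key[OF cone cvx assms(3) S t ys1 ys3])
  show "S \<in> {(\<lambda>x. T x - (ys (t x) / ys e) *\<^sub>R e) | T. T \<in> sv_subdiff K F xb}"
    using T by (intro CollectI exI[of _ "\<lambda>x. S x + (ys (t x) / ys e) *\<^sub>R e"]) auto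
  qed
qed

end
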